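(* Let $D$ be a unique factorization domain and let $m$ be a nonzero element of $D$. Then $\tau_m=P_{J(m)}$, and consequently $\tau_m$ is a congruence on $D_{mult}$ such that the factor semigroup $D_{mult}/\tau_m$ satisfies Condition $( * )$.
   Context: $D_{mult}$ denotes the multiplicative semigroup of $D$; $e$ is the identity of $D$. For $a,b\in D$, $a\sim b$ means $a$ and $b$ are associates. $J(m)=mD$ is the ideal of $D$ generated by $m$ (it is also an ideal of $D_{mult}$). For $m\in D$, $\tau_m$ is the relation on $D$ given by $(a,b)\in\tau_m$ iff $\gcd(a,m)\sim\gcd(b,m)$. For a semigroup $S$, $H\subseteq S$ and $a\in S$, let $H\dots a=\{(x,y)\in S\times S: xay\in H\}$, and $P_H=\{(a,b)\in S\times S: H\dots a=H\dots b\}$ (the principal congruence defined by $H$); here $P_{J(m)}$ is computed in $S=D_{mult}$. For a commutative semigroup $S$ with zero $0$, $A(s)=\{x\in S: xs=0\}$. A semigroup $S$ satisfies Condition $( * )$ if: (1) $S$ is a commutative monoid with a zero; (2) $A(s)\neq\{0\}$ for every non-identity $s\in S$; (3) $A(s)=A(t)$ implies $s=t$ for all $s,t\in S$. *)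

theory Defs
  imports "HOL-Computational_Algebra.Computational_Algebra"
begin

definition assoc_el :: "'a::comm_semiring_1 \<Rightarrow> 'a \<Rightarrow> bool" where
  "assoc_el a b \<longleftrightarrow> a dvd b \<and> b dvd a"

definition tau :: "'a::factorial_ring_gcd \<Rightarrow> ('a \<times> 'a) set" where
  "tau m = {(a, b). assoc_el (gcd a m) (gcd b m)}"

definition J :: "'a::comm_semiring_1 \<Rightarrow> 'a set" where
  "J m = {m * x | x. True}"

definition res :: "'a::semigroup_mult set \<Rightarrow> 'a \<Rightarrow> ('a \<times> 'a) set" where
  "res H a = {(x, y). x * a * y \<in> H}"

definition P :: "'a::semigroup_mult set \<Rightarrow> ('a \<times> 'a) set" where
  "P H = {(a, b). res H a = res H b}"

definition mult_congruence :: "('a::semigroup_mult \<times> 'a) set \<Rightarrow> bool" where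
  "mult_congruence r \<longleftrightarrow> equiv UNIV r \<and>
     (\<forall>a b c. (a, b) \<in> r \<longrightarrow> (a * c, b * c) \<in> r \<and> (c * a, c * b) \<in> r)"

definition quot_mult :: "('a::semigroup_mult \<times> 'a) set \<Rightarrow> 'a set \<Rightarrow> 'a set \<Rightarrow> 'a set" where
  "quot_mult r X Y = (\<Union>x\<in>X. \<Union>y\<in>Y. r `` {x * y})"

definition annih :: "'b set \<Rightarrow> ('b \<Rightarrow> 'b \<Rightarrow> 'b) \<Rightarrow> 'b \<Rightarrow> 'b \<Rightarrow> 'b set" where
  "annih S f z s = {x \<in> S. f x s = z}"

definition cond_star :: "'b set \<Rightarrow> ('b \<Rightarrow> 'b \<Rightarrow> 'b) \<Rightarrow> bool" where
  "cond_star S f \<longleftrightarrow>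
     (\<forall>x\<in>S. \<forall>y\<in>S. f x y \<in> S) \<and>
     (\<forall>x\<in>S. \<forall>y\<in>S. \<forall>w\<in>S. f (f x y) w = f x (f y w)) \<and>
     (\<exists>e\<in>S. \<exists>z\<in>S.
        (\<forall>x\<in>S. \<forall>y\<in>S. f x y = f y x) \<and>
        (\<forall>x\<in>S. f e x = x \<and> f x e = x) \<and>
        (\<forall>x\<in>S. f z x = z \<and> f x z = z) \<and>
        (\<forall>s\<in>S. s \<noteq> e \<longrightarrow> annih S f z s \<noteq> {z}) \<and>
        (\<forall>s\<in>S. \<forall>t\<in>S. annih S f z s = annih S f z t \<longrightarrow> s = t))"

end

theory Submission
  imports Defs
begin

lemma K:
  fixes m :: "'a::factorial_ring_gcd"
  assumes "m \<noteq> 0"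
  shows "m dvd x * a \<longleftrightarrow> (m div gcd a m) dvd x"
proof -
  define g where "g = gcd a m"
  have g0: "g \<noteq> 0" using assms by (simp add: g_def)
  define a' where "a' = a div g"
  define m' where "m' = m div g"
  have a: "a = g * a'" unfolding a'_def g_def by simp
  have mm: "m = g * m'" unfolding m'_def g_def by simp
  have cop: "coprime m' a'" using div_gcd_coprime[of a m] assms
    unfolding a'_def m'_def g_def by (simp add: coprime_commute)
  have "m dvd x * a \<longleftrightarrow> g * m' dvd g * (x * a')" by (simp add: a mm ac_simps)
  also have "\<dots> \<longleftrightarrow> m' dvd x * a'" using g0 by simp
  also have "\<dots> \<longleftrightarrow> m' dvd x" using cop by (simp add: coprime_dvd_mult_left_iff)
  finally show ?thesis unfolding m'_def g_def .
qed

lemma L: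
  fixes m :: "'a::factorial_ring_gcd"
  assumes "m \<noteq> 0"
  shows "(\<forall>x. m dvd x * a \<longleftrightarrow> m dvd x * b) \<longleftrightarrow> gcd a m = gcd b m"
proof
  assume "gcd a m = gcd b m" then show "\<forall>x. m dvd x * a \<longleftrightarrow> m dvd x * b"
    using K[OF assms] by simp
next
  assume H: "\<forall>x. m dvd x * a \<longleftrightarrow> m dvd x * b"
  have D: "(m div gcd a m) dvd x \<longleftrightarrow> (m div gcd b m) dvd x" for x
    using H K[OF assms] by simp
  have *: "gcd b m dvd gcd a m" if dd: "(m div gcd a m) dvd (m div gcd b m)" for a b :: 'a
  proof -
    obtain k where k: "m div gcd b m = (m div gcd a m) * k" using dd by blast
    have "gcd b m * (m div gcd a m) * k = gcd a m * (m div gcd a m)"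
      using k by (metis gcd_dvd2 dvd_mult_div_cancel mult.assoc)
    moreover have "m div gcd a m \<noteq> 0" using assms
      by (metis div_by_0 dvd_div_eq_0_iff gcd_dvd2 gcd_eq_0_iff)
    ultimately have "gcd a m = gcd b m * k"
      by (metis mult.commute mult.left_commute mult_left_cancel)
    then show ?thesis by simp
  qed
  show "gcd a m = gcd b m"
    using gcd_dvd_antisym[OF *[of b a] *[of a b]] D[of "m div gcd a m"] D[of "m div gcd b m"] by simp
qed

lemma tau_iff: "(a, b) \<in> tau m \<longleftrightarrow> gcd a m = gcd b m"
  unfolding tau_def assoc_el_def
  by (metis (no_types, lifting) case_prod_conv dvd_refl gcd_dvd_antisym mem_Collect_eq)

lemma gcd_full: "gcd x (m::'a::factorial_ring_gcd) = gcd 0 m \<longleftrightarrow> m dvd x"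
proof
  assume "gcd x m = gcd 0 m" then show "m dvd x"
    by (metis gcd_0_left gcd_dvd1 normalize_dvd_iff)
next
  assume "m dvd x" then show "gcd x m = gcd 0 m"
    by (simp add: gcd_0_left gcd_proj2_iff)
qed

lemma tauP:
  fixes m :: "'a::factorial_ring_gcd"
  assumes "m \<noteq> 0"
  shows "tau m = P (J m)"
proof -
  have J: "z \<in> J m \<longleftrightarrow> m dvd z" for z unfolding J_def by (auto simp: dvd_def)
  have RE: "res (J m) a = res (J m) b \<longleftrightarrow> (\<forall>x. m dvd x * a \<longleftrightarrow> m dvd x * b)" for a b
  proof
    assume "res (J m) a = res (J m) b"
    then have "(x, 1) \<in> res (J m) a \<longleftrightarrow> (x, 1) \<in> res (J m) b" for x by simp
    then show "\<forall>x. m dvd x * a \<longleftrightarrow> m dvd x * b" unfolding res_def by (simp add: J)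
  next
    assume H: "\<forall>x. m dvd x * a \<longleftrightarrow> m dvd x * b"
    have "m dvd x * a * y \<longleftrightarrow> m dvd x * b * y" for x y
      using H[rule_format, of "x * y"] by (simp add: ac_simps)
    then show "res (J m) a = res (J m) b" unfolding res_def by (simp add: J)
  qed
  show ?thesis unfolding P_def
  proof (intro set_eqI)
    fix p :: "'a \<times> 'a"
    obtain a b where p: "p = (a, b)" by (cases p)
    show "p \<in> tau m \<longleftrightarrow> p \<in> {(a, b). res (J m) a = res (J m) b}"
      unfolding p using RE[of a b] L[OF assms, of a b] tau_iff[of a b m] by simp
  qed
qed

lemma compat:
  fixes m :: "'a::factorial_ring_gcd"
  assumes "m \<noteq> 0" "gcd a m = gcd b m"
  shows "gcd (a * c) m = gcd (b * c) m"
proof -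
  have H: "\<forall>x. m dvd x * a \<longleftrightarrow> m dvd x * b" using L[OF assms(1)] assms(2) by simp
  have "\<forall>x. m dvd x * (a * c) \<longleftrightarrow> m dvd x * (b * c)"
  proof
    fix x
    have e1: "x * (a * c) = (x * c) * a" and e2: "x * (b * c) = (x * c) * b"
      by (simp_all add: ac_simps)
    show "m dvd x * (a * c) \<longleftrightarrow> m dvd x * (b * c)" unfolding e1 e2 using H by blast
  qed
  then show ?thesis using L[OF assms(1)] by simp
qed

lemma tau_equiv: "equiv UNIV (tau m)"
proof (rule equivI)
  show "tau m \<subseteq> UNIV \<times> UNIV" by simp
  show "refl_on UNIV (tau m)" by (rule refl_onI) (simp_all only: tau_iff UNIV_I)
  show "sym (tau m)" by (rule symI) (simp only: tau_iff eq_commute)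
  show "trans (tau m)"
  proof (rule transI)
    fix x y z assume "(x, y) \<in> tau m" "(y, z) \<in> tau m"
    then have "gcd x m = gcd y m" "gcd y m = gcd z m" by (simp_all only: tau_iff)
    then have "gcd x m = gcd z m" by (rule trans)
    then show "(x, z) \<in> tau m" by (simp only: tau_iff)
  qed
qed

lemma cong:
  fixes m :: "'a::factorial_ring_gcd"
  assumes "m \<noteq> 0"
  shows "mult_congruence (tau m)"
proof -
  have "(a * c, b * c) \<in> tau m \<and> (c * a, c * b) \<in> tau m" if "(a, b) \<in> tau m" for a b c
  proof -
    have g: "gcd a m = gcd b m" using that by (simp only: tau_iff)
    have "gcd (a * c) m = gcd (b * c) m" by (rule compat[OF assms g])
    moreover have "c * a = a * c" "c * b = b * c" by (simp_all only: mult.commute)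
    ultimately show ?thesis by (simp only: tau_iff)
  qed
  then show ?thesis unfolding mult_congruence_def using tau_equiv by blast
qed

lemma cls_eq: "tau m `` {a} = tau m `` {b} \<longleftrightarrow> gcd a m = gcd b m"
  using eq_equiv_class_iff[OF tau_equiv, of a b m] tau_iff by simp

lemma quot_range: "UNIV // tau m = range (\<lambda>a. tau m `` {a})"
  unfolding quotient_def by auto

lemma qmult:
  fixes m :: "'a::factorial_ring_gcd"
  assumes "m \<noteq> 0"
  shows "quot_mult (tau m) (tau m `` {a}) (tau m `` {b}) = tau m `` {a * b}"
proof
  show "tau m `` {a * b} \<subseteq> quot_mult (tau m) (tau m `` {a}) (tau m `` {b})"
  proof
    fix z assume z: "z \<in> tau m `` {a * b}"
    have a: "a \<in> tau m `` {a}" and b: "b \<in> tau m `` {b}" by (simp_all add: tau_iff)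
    show "z \<in> quot_mult (tau m) (tau m `` {a}) (tau m `` {b})"
      unfolding quot_mult_def using a b z by blast
  qed
next
  show "quot_mult (tau m) (tau m `` {a}) (tau m `` {b}) \<subseteq> tau m `` {a * b}"
  proof
    fix z assume "z \<in> quot_mult (tau m) (tau m `` {a}) (tau m `` {b})"
    then obtain x y where xy: "gcd a m = gcd x m" "gcd b m = gcd y m" "gcd (x * y) m = gcd z m"
      unfolding quot_mult_def by (auto simp: tau_iff)
    have "gcd (a * b) m = gcd (x * b) m" using compat[OF assms xy(1)] .
    also have "\<dots> = gcd (x * y) m" using compat[OF assms xy(2), of x] by (simp add: mult.commute)
    finally show "z \<in> tau m `` {a * b}" using xy(3) by (simp add: tau_iff)
  qed
qed

lemma not_dvd_co:
  fixes m :: "'a::factorial_ring_gcd"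
  assumes "m \<noteq> 0" "gcd a m \<noteq> 1"
  shows "\<not> m dvd (m div gcd a m)"
proof
  assume H: "m dvd (m div gcd a m)"
  define g where "g = gcd a m"
  define m' where "m' = m div g"
  have mm: "m = g * m'" unfolding m'_def g_def by simp
  have m0: "m' \<noteq> 0" using assms(1) mm by (metis mult_zero_right)
  have "m dvd m'" using H unfolding m'_def g_def .
  then have "g * m' dvd 1 * m'" using mm by simp
  then have "g dvd 1" using m0 by (metis dvd_times_right_cancel_iff)
  then have "gcd a m = 1" unfolding g_def using is_unit_gcd_iff by blast
  then show False using assms(2) by simp
qed

theorem theorem3:
  fixes m :: "'a::factorial_ring_gcd"
  assumes "m \<noteq> 0"
  shows "tau m = P (J m) \<and> mult_congruence (tau m) \<and>
         cond_star (UNIV // tau m) (quot_mult (tau m))"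
proof -
  define c where "c = (\<lambda>a. tau m `` {a})"
  define f where "f = quot_mult (tau m)"
  have S: "UNIV // tau m = range c" unfolding c_def by (rule quot_range)
  have fc: "f (c a) (c b) = c (a * b)" for a b
    unfolding f_def c_def by (rule qmult[OF assms])
  have ceq: "c a = c b \<longleftrightarrow> gcd a m = gcd b m" for a b unfolding c_def by (rule cls_eq)
  have ann: "c x \<in> annih (range c) f (c 0) (c a) \<longleftrightarrow> m dvd x * a" for x a
    unfolding annih_def using gcd_full[of "x * a" m] by (simp add: fc ceq)
  have ann2: "X \<in> annih (range c) f (c 0) (c a) \<Longrightarrow> X \<in> range c" for X a
    unfolding annih_def by simp
  have ann_eq: "annih (range c) f (c 0) (c a) = annih (range c) f (c 0) (c b)
      \<longleftrightarrow> (\<forall>x. m dvd x * a \<longleftrightarrow> m dvd x * b)" for a b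
  proof
    assume "annih (range c) f (c 0) (c a) = annih (range c) f (c 0) (c b)"
    then show "\<forall>x. m dvd x * a \<longleftrightarrow> m dvd x * b" using ann by metis
  next
    assume H: "\<forall>x. m dvd x * a \<longleftrightarrow> m dvd x * b"
    show "annih (range c) f (c 0) (c a) = annih (range c) f (c 0) (c b)"
    proof (intro set_eqI iffI)
      fix X assume X: "X \<in> annih (range c) f (c 0) (c a)"
      then obtain x where "X = c x" using ann2 by blast
      then show "X \<in> annih (range c) f (c 0) (c b)" using X ann H by simp
    next
      fix X assume X: "X \<in> annih (range c) f (c 0) (c b)"
      then obtain x where "X = c x" using ann2 by blast
      then show "X \<in> annih (range c) f (c 0) (c a)" using X ann H by simp
    qed
  qed
  have c1: "c 1 = c a \<longleftrightarrow> gcd a m = 1" for a using ceq[of 1 a] by auto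
  have cs: "cond_star (range c) f"
    unfolding cond_star_def
  proof (intro conjI)
    show "\<forall>x\<in>range c. \<forall>y\<in>range c. f x y \<in> range c" using fc by auto
    show "\<forall>x\<in>range c. \<forall>y\<in>range c. \<forall>w\<in>range c. f (f x y) w = f x (f y w)"
      using fc by (auto simp: mult.assoc)
    show "\<exists>e\<in>range c. \<exists>z\<in>range c. (\<forall>x\<in>range c. \<forall>y\<in>range c. f x y = f y x) \<and>
        (\<forall>x\<in>range c. f e x = x \<and> f x e = x) \<and>
        (\<forall>x\<in>range c. f z x = z \<and> f x z = z) \<and>
        (\<forall>s\<in>range c. s \<noteq> e \<longrightarrow> annih (range c) f z s \<noteq> {z}) \<and>
        (\<forall>s\<in>range c. \<forall>t\<in>range c. annih (range c) f z s = annih (range c) f z t \<longrightarrow> s = t)"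
    proof (rule bexI[of _ "c 1"], rule bexI[of _ "c 0"], intro conjI)
      show "\<forall>x\<in>range c. \<forall>y\<in>range c. f x y = f y x" using fc by (auto simp: mult.commute)
      show "\<forall>x\<in>range c. f (c 1) x = x \<and> f x (c 1) = x" using fc by auto
      show "\<forall>x\<in>range c. f (c 0) x = c 0 \<and> f x (c 0) = c 0" using fc by auto
      show "\<forall>s\<in>range c. s \<noteq> c 1 \<longrightarrow> annih (range c) f (c 0) s \<noteq> {c 0}"
      proof (intro ballI impI)
        fix s assume "s \<in> range c" "s \<noteq> c 1"
        then obtain a where s: "s = c a" and g: "gcd a m \<noteq> 1" using c1 by auto
        define x where "x = m div gcd a m"
        have "m dvd x * a" unfolding x_def using K[OF assms] by simp
        then have "c x \<in> annih (range c) f (c 0) s" using ann s by simp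
        moreover have "c x \<noteq> c 0"
          using not_dvd_co[OF assms g] unfolding x_def ceq gcd_full .
        ultimately show "annih (range c) f (c 0) s \<noteq> {c 0}" by auto
      qed
      show "\<forall>s\<in>range c. \<forall>t\<in>range c. annih (range c) f (c 0) s = annih (range c) f (c 0) t \<longrightarrow> s = t"
      proof (intro ballI impI)
        fix s t assume "s \<in> range c" "t \<in> range c"
          and E: "annih (range c) f (c 0) s = annih (range c) f (c 0) t"
        then obtain a b where s: "s = c a" and t: "t = c b" by auto
        have "\<forall>x. m dvd x * a \<longleftrightarrow> m dvd x * b" using E ann_eq s t by simp
        then show "s = t" using L[OF assms] ceq s t by simp
      qed
    qed simp_all
  qed
  have "cond_star (UNIV // tau m) (quot_mult (tau m))" using cs unfolding S f_def .
  then show ?thesis using tauP[OF assms] cong[OF assms] by blast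
qed

end
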